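(* Let $X$ be a finite set with $N=|X|\ge 2$, $n=\binom N2$, and let $\mathcal{X}$ be a partition of $X$. Let $\Gamma$ be the set of all $t\in\mathcal{B}(K_N)$ whose coarse type is $\mathcal{X}$. Then $\Gamma$ is tropically convex: for all $s,t\in\Gamma$ and all $\lambda,\mu\in\mathbb{R}$, the coordinatewise maximum $\max\{s+\lambda\mathbb{1},\,t+\mu\mathbb{1}\}$ lies in $\Gamma$.
   Context: Coordinates of $\mathbb{R}^n$ are indexed by unordered pairs $\{a,b\}$ of distinct elements of $X$, written $t_{ab}$; $\mathbb{1}$ is the all-ones vector. The Bergman fan of the complete graphical matroid is $\mathcal{B}(K_N)=\{t\in\mathbb{R}^n : \text{for all pairwise distinct } a,b,c\in X, \text{ the maximum of } t_{ab},t_{ac},t_{bc} \text{ is attained at least twice}\}$; its elements correspond to equidistant phylogenetic trees with leaf set $X$ via $t_{ab}=$ path length between leaves $a,b$. The coarse type of $t\in\mathcal{B}(K_N)$ is the partition $\{X_i\}_{i\in I}$ of $X$ such that, with $M=\max_{a\neq b}t_{ab}$, two distinct elements $a,b$ lie in the same block iff $t_{ab}<M$; equivalently, $\max\{t_{ab}: a\ne b \text{ in a common block}\}<\min\{t_{ab}: a\in X_i,b\in X_j,i\neq j\}=\max\{t_{ab}: a\in X_i,b\in X_j,i\ne j\}$ (these are the leaf sets of the subtrees hanging at the children of the root). *)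

theory Defs
  imports Complex_Main
begin

text \<open>Points of R^n, n = N choose 2, are functions t on the unordered pairs {a,b}
  (a \<noteq> b in X); the coordinate t_ab is t {a,b}. Values of t on other sets are irrelevant.\<close>

definition in_bergman :: "'a set \<Rightarrow> ('a set \<Rightarrow> real) \<Rightarrow> bool" where
  "in_bergman X t \<longleftrightarrow>
    (\<forall>a\<in>X. \<forall>b\<in>X. \<forall>c\<in>X. a \<noteq> b \<and> a \<noteq> c \<and> b \<noteq> c \<longrightarrow>
      (let m = max (max (t {a,b}) (t {a,c})) (t {b,c}) in
        (t {a,b} = m \<and> t {a,c} = m) \<or> (t {a,b} = m \<and> t {b,c} = m) \<or>
        (t {a,c} = m \<and> t {b,c} = m)))"

definition is_partition :: "'a set set \<Rightarrow> 'a set \<Rightarrow> bool" where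
  "is_partition P X \<longleftrightarrow> \<Union>P = X \<and> (\<forall>B\<in>P. B \<noteq> {}) \<and>
     (\<forall>B\<in>P. \<forall>C\<in>P. B \<noteq> C \<longrightarrow> B \<inter> C = {})"

definition max_coord :: "'a set \<Rightarrow> ('a set \<Rightarrow> real) \<Rightarrow> real" where
  "max_coord X t = Max {t {a,b} | a b. a \<in> X \<and> b \<in> X \<and> a \<noteq> b}"

definition has_coarse_type :: "'a set \<Rightarrow> ('a set \<Rightarrow> real) \<Rightarrow> 'a set set \<Rightarrow> bool" where
  "has_coarse_type X t P \<longleftrightarrow> is_partition P X \<and>
     (\<forall>a\<in>X. \<forall>b\<in>X. a \<noteq> b \<longrightarrow>
        ((\<exists>B\<in>P. a \<in> B \<and> b \<in> B) \<longleftrightarrow> t {a,b} < max_coord X t))"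

definition Gamma :: "'a set \<Rightarrow> 'a set set \<Rightarrow> ('a set \<Rightarrow> real) set" where
  "Gamma X P = {t. in_bergman X t \<and> has_coarse_type X t P}"

end

theory Submission
  imports Defs
begin

lemma two_max_comb:
  fixes x1 x2 x3 y1 y2 y3 l m :: real
  assumes "let M = max (max x1 x2) x3 in (x1 = M \<and> x2 = M) \<or> (x1 = M \<and> x3 = M) \<or> (x2 = M \<and> x3 = M)"
    and "let M = max (max y1 y2) y3 in (y1 = M \<and> y2 = M) \<or> (y1 = M \<and> y3 = M) \<or> (y2 = M \<and> y3 = M)"
  shows "let M = max (max (max (x1+l) (y1+m)) (max (x2+l) (y2+m))) (max (x3+l) (y3+m)) in
     (max (x1+l) (y1+m) = M \<and> max (x2+l) (y2+m) = M) \<or> (max (x1+l) (y1+m) = M \<and> max (x3+l) (y3+m) = M)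
   \<or> (max (x2+l) (y2+m) = M \<and> max (x3+l) (y3+m) = M)"
  using assms unfolding Let_def by (smt (verit))

lemma mc_props:
  fixes X :: "'a set" and t :: "'a set \<Rightarrow> real"
  assumes "finite X" "card X \<ge> 2"
  shows "\<And>a b. a \<in> X \<Longrightarrow> b \<in> X \<Longrightarrow> a \<noteq> b \<Longrightarrow> t {a,b} \<le> max_coord X t"
    and "\<exists>a\<in>X. \<exists>b\<in>X. a \<noteq> b \<and> t {a,b} = max_coord X t"
proof -
  let ?S = "{t {a,b} | a b. a \<in> X \<and> b \<in> X \<and> a \<noteq> b}"
  have fin: "finite ?S"
  proof -
    have "?S \<subseteq> (\<lambda>(a,b). t {a,b}) ` (X \<times> X)" by auto
    then show ?thesis using assms(1) finite_subset by blast
  qed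
  obtain a b where ab: "a \<in> X" "b \<in> X" "a \<noteq> b"
  proof -
    have "1 < card X" using assms(2) by simp
    then show ?thesis using that card_le_Suc0_iff_eq[OF assms(1)] by (metis not_le One_nat_def)
  qed
  have ne: "?S \<noteq> {}" using ab by blast
  show "\<And>a b. a \<in> X \<Longrightarrow> b \<in> X \<Longrightarrow> a \<noteq> b \<Longrightarrow> t {a,b} \<le> max_coord X t"
    unfolding max_coord_def using fin by (intro Max_ge) auto
  have "max_coord X t \<in> ?S" unfolding max_coord_def using fin ne by (rule Max_in)
  then show "\<exists>a\<in>X. \<exists>b\<in>X. a \<noteq> b \<and> t {a,b} = max_coord X t" by force
qed

theorem mainTheorem4:
  fixes X :: "'a set" and P :: "'a set set" and s t :: "'a set \<Rightarrow> real"
    and lam mu :: real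
  assumes "finite X" and "card X \<ge> 2" and "is_partition P X"
    and "s \<in> Gamma X P" and "t \<in> Gamma X P"
  shows "(\<lambda>e. max (s e + lam) (t e + mu)) \<in> Gamma X P"
proof -
  define u where "u = (\<lambda>e. max (s e + lam) (t e + mu))"
  have sb: "in_bergman X s" and sc: "has_coarse_type X s P"
    and tb: "in_bergman X t" and tc: "has_coarse_type X t P"
    using assms(4,5) unfolding Gamma_def by auto
  have ub: "in_bergman X u"
    unfolding in_bergman_def u_def
  proof (intro ballI impI)
    fix a b c assume "a \<in> X" "b \<in> X" "c \<in> X" "a \<noteq> b \<and> a \<noteq> c \<and> b \<noteq> c"
    then show "let m = max (max (max (s {a, b} + lam) (t {a, b} + mu)) (max (s {a, c} + lam) (t {a, c} + mu)))
               (max (s {b, c} + lam) (t {b, c} + mu))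
      in max (s {a, b} + lam) (t {a, b} + mu) = m \<and> max (s {a, c} + lam) (t {a, c} + mu) = m \<or>
         max (s {a, b} + lam) (t {a, b} + mu) = m \<and> max (s {b, c} + lam) (t {b, c} + mu) = m \<or>
         max (s {a, c} + lam) (t {a, c} + mu) = m \<and> max (s {b, c} + lam) (t {b, c} + mu) = m"
      using sb tb unfolding in_bergman_def by (intro two_max_comb) auto
  qed
  let ?M = "max (max_coord X s + lam) (max_coord X t + mu)"
  note s1 = mc_props(1)[OF assms(1,2), of _ _ s]
  note t1 = mc_props(1)[OF assms(1,2), of _ _ t]
  have Hs: "\<forall>a\<in>X. \<forall>b\<in>X. a \<noteq> b \<longrightarrow> ((\<exists>B\<in>P. a \<in> B \<and> b \<in> B) \<longleftrightarrow> s {a,b} < max_coord X s)"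
    using sc unfolding has_coarse_type_def by (rule conjunct2)
  have Ht: "\<forall>a\<in>X. \<forall>b\<in>X. a \<noteq> b \<longrightarrow> ((\<exists>B\<in>P. a \<in> B \<and> b \<in> B) \<longleftrightarrow> t {a,b} < max_coord X t)"
    using tc unfolding has_coarse_type_def by (rule conjunct2)
  have sct: "\<And>a b. a \<in> X \<Longrightarrow> b \<in> X \<Longrightarrow> a \<noteq> b \<Longrightarrow>
      (s {a,b} < max_coord X s) = (t {a,b} < max_coord X t)"
    using Hs Ht by metis
  have ule: "\<And>a b. a \<in> X \<Longrightarrow> b \<in> X \<Longrightarrow> a \<noteq> b \<Longrightarrow> u {a,b} \<le> ?M"
  proof -
    fix a b assume ab: "a \<in> X" "b \<in> X" "a \<noteq> b"
    show "u {a,b} \<le> ?M" unfolding u_def using s1[OF ab] t1[OF ab] by linarith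
  qed
  obtain a0 b0 where ab0: "a0 \<in> X" "b0 \<in> X" "a0 \<noteq> b0" "s {a0,b0} = max_coord X s"
    using mc_props(2)[OF assms(1,2), of s] by blast
  have "t {a0,b0} = max_coord X t" using sct[OF ab0(1-3)] ab0(4) t1[OF ab0(1-3)] by linarith
  then have "u {a0,b0} = ?M" using ab0 unfolding u_def by simp
  have umc: "max_coord X u = ?M"
  proof -
    obtain a b where ab: "a \<in> X" "b \<in> X" "a \<noteq> b" "u {a,b} = max_coord X u"
      using mc_props(2)[OF assms(1,2), of u] by blast
    have "max_coord X u \<le> ?M" using ule[OF ab(1-3)] ab(4) by simp
    moreover have "?M \<le> max_coord X u"
      using mc_props(1)[OF assms(1,2) ab0(1-3), of u] \<open>u {a0,b0} = ?M\<close> by simp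
    ultimately show ?thesis by simp
  qed
  have uc: "has_coarse_type X u P"
    unfolding has_coarse_type_def
  proof (intro conjI ballI impI)
    show "is_partition P X" by fact
    fix a b assume ab: "a \<in> X" "b \<in> X" "a \<noteq> b"
    have e1: "(\<exists>B\<in>P. a \<in> B \<and> b \<in> B) = (s {a,b} < max_coord X s)"
      using Hs ab by metis
    have "(s {a,b} < max_coord X s) = (u {a,b} < max_coord X u)"
      using sct[OF ab] s1[OF ab] t1[OF ab] umc unfolding u_def by linarith
    then show "(\<exists>B\<in>P. a \<in> B \<and> b \<in> B) = (u {a,b} < max_coord X u)" using e1 by simp
  qed
  show ?thesis using ub uc unfolding Gamma_def u_def by simp
qed

end
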